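(* The logic $\mathsf{iCB}:=\mathsf{iCC}\oplus(((p\mathrel{\Box\!\!\!\rightarrow} q)\wedge(q\mathrel{\Box\!\!\!\rightarrow} p)\wedge(p\mathrel{\Box\!\!\!\rightarrow} r))\to(q\mathrel{\Box\!\!\!\rightarrow} r))\oplus((p\mathrel{\Box\!\!\!\rightarrow} q)\to(p\mathrel{\Box\!\!\!\rightarrow}(p\mathrel{\Box\!\!\!\rightarrow} q)))$ is sound and complete with respect to the class of cautious conditional frames satisfying, for all worlds $x$ and upsets $a,b$: if $R_a[x]\subseteq b$ and $R_b[x]\subseteq a$ then ${\uparrow}R_a[x]={\uparrow}R_b[x]$; and $(R_a\circ R_a)\subseteq(R_a\circ\leq)$.
   Context: Formulas: $\phi ::= p\mid\bot\mid\phi\wedge\phi\mid\phi\vee\phi\mid\phi\to\phi\mid\phi\mathrel{\Box\!\!\!\rightarrow}\phi$. $\mathsf{ICK}\oplus\Gamma$ is the smallest set containing intuitionistic propositional logic, $\Gamma$, $(p\mathrel{\Box\!\!\!\rightarrow}(q\wedge r))\leftrightarrow((p\mathrel{\Box\!\!\!\rightarrow} q)\wedge(p\mathrel{\Box\!\!\!\rightarrow} r))$ and $(p\mathrel{\Box\!\!\!\rightarrow}\top)\leftrightarrow\top$, closed under uniform substitution, modus ponens and congruence rules for both arguments of $\mathrel{\Box\!\!\!\rightarrow}$. $\mathsf{iCC}=\mathsf{ICK}\oplus(p\mathrel{\Box\!\!\!\rightarrow} p)\oplus(((p\mathrel{\Box\!\!\!\rightarrow} q)\wedge((p\wedge q)\mathrel{\Box\!\!\!\rightarrow}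 r))\to(p\mathrel{\Box\!\!\!\rightarrow} r))\oplus(((p\mathrel{\Box\!\!\!\rightarrow} q)\wedge(p\mathrel{\Box\!\!\!\rightarrow} r))\to((p\wedge q)\mathrel{\Box\!\!\!\rightarrow} r))$. A conditional frame is $(X,\leq,\mathcal{R})$, $(X,\leq)$ a nonempty preorder, $\mathcal{R}=\{R_a\mid a\text{ an upset}\}$ with $(\leq\circ R_a)\subseteq(R_a\circ\leq)$; $x\models\phi\mathrel{\Box\!\!\!\rightarrow}\psi$ iff every $y$ with $xR_{V(\phi)}y$ satisfies $\psi$. A cautious conditional frame satisfies $R_a[x]\subseteq a$ and ($R_a[x]\subseteq b\subseteq a$ implies ${\uparrow}R_a[x]={\uparrow}R_b[x]$) for all $x$ and upsets $a,b$. *)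

theory Defs
  imports Main
begin

datatype form =
    Atom nat
  | Bot
  | And form form
  | Or form form
  | Imp form form
  | Cond form form

definition Top :: form where "Top = Imp Bot Bot"
definition Iff :: "form \<Rightarrow> form \<Rightarrow> form" where
  "Iff a b = And (Imp a b) (Imp b a)"

fun subst :: "(nat \<Rightarrow> form) \<Rightarrow> form \<Rightarrow> form" where
  "subst s (Atom n) = s n"
| "subst s Bot = Bot"
| "subst s (And a b) = And (subst s a) (subst s b)"
| "subst s (Or a b) = Or (subst s a) (subst s b)"
| "subst s (Imp a b) = Imp (subst s a) (subst s b)"
| "subst s (Cond a b) = Cond (subst s a) (subst s b)"

abbreviation "P \<equiv> Atom 0"
abbreviation "Q \<equiv> Atom 1"
abbreviation "Rr \<equiv> Atom 2"

inductive_set IPC :: "form set" where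
  k: "Imp a (Imp b a) \<in> IPC"
| s: "Imp (Imp a (Imp b c)) (Imp (Imp a b) (Imp a c)) \<in> IPC"
| c1: "Imp (And a b) a \<in> IPC"
| c2: "Imp (And a b) b \<in> IPC"
| c3: "Imp a (Imp b (And a b)) \<in> IPC"
| d1: "Imp a (Or a b) \<in> IPC"
| d2: "Imp b (Or a b) \<in> IPC"
| d3: "Imp (Imp a c) (Imp (Imp b c) (Imp (Or a b) c)) \<in> IPC"
| efq: "Imp Bot a \<in> IPC"
| mp: "Imp a b \<in> IPC \<Longrightarrow> a \<in> IPC \<Longrightarrow> b \<in> IPC"

inductive_set ICK_plus :: "form set \<Rightarrow> form set" for G :: "form set" where
  ipc: "a \<in> IPC \<Longrightarrow> a \<in> ICK_plus G"
| gam: "a \<in> G \<Longrightarrow> a \<in> ICK_plus G"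
| cm: "Iff (Cond P (And Q Rr)) (And (Cond P Q) (Cond P Rr)) \<in> ICK_plus G"
| cn: "Iff (Cond P Top) Top \<in> ICK_plus G"
| us: "a \<in> ICK_plus G \<Longrightarrow> subst s a \<in> ICK_plus G"
| mp: "Imp a b \<in> ICK_plus G \<Longrightarrow> a \<in> ICK_plus G \<Longrightarrow> b \<in> ICK_plus G"
| congL: "Iff a b \<in> ICK_plus G \<Longrightarrow> Iff (Cond a c) (Cond b c) \<in> ICK_plus G"
| congR: "Iff a b \<in> ICK_plus G \<Longrightarrow> Iff (Cond c a) (Cond c b) \<in> ICK_plus G"

definition iCC_axioms :: "form set" where
  "iCC_axioms = {Cond P P,
     Imp (And (Cond P Q) (Cond (And P Q) Rr)) (Cond P Rr),
     Imp (And (Cond P Q) (Cond P Rr)) (Cond (And P Q) Rr)}"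

definition iCB_axioms :: "form set" where
  "iCB_axioms = iCC_axioms \<union>
    {Imp (And (Cond P Q) (And (Cond Q P) (Cond P Rr))) (Cond Q Rr),
     Imp (Cond P Q) (Cond P (Cond P Q))}"

definition iCB :: "form set" where "iCB = ICK_plus iCB_axioms"

record 'w cframe =
  carrier :: "'w set"
  leq :: "'w \<Rightarrow> 'w \<Rightarrow> bool"
  rel :: "'w set \<Rightarrow> 'w \<Rightarrow> 'w \<Rightarrow> bool"

definition upset :: "('w, 'm) cframe_scheme \<Rightarrow> 'w set \<Rightarrow> bool" where
  "upset F a \<longleftrightarrow> a \<subseteq> carrier F \<and>
     (\<forall>x\<in>a. \<forall>y\<in>carrier F. leq F x y \<longrightarrow> y \<in> a)"

definition img :: "('w, 'm) cframe_scheme \<Rightarrow> 'w set \<Rightarrow> 'w \<Rightarrow> 'w set" where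
  "img F a x = {y. rel F a x y}"

definition up :: "('w, 'm) cframe_scheme \<Rightarrow> 'w set \<Rightarrow> 'w set" where
  "up F S = {y \<in> carrier F. \<exists>s\<in>S. leq F s y}"

text \<open>Relational composition is read diagrammatically: (S o T) relates x to z
  iff x S y and y T z for some y.\<close>
definition cond_frame :: "('w, 'm) cframe_scheme \<Rightarrow> bool" where
  "cond_frame F \<longleftrightarrow>
     carrier F \<noteq> {} \<and>
     (\<forall>x y. leq F x y \<longrightarrow> x \<in> carrier F \<and> y \<in> carrier F) \<and>
     (\<forall>x\<in>carrier F. leq F x x) \<and>
     (\<forall>x y z. leq F x y \<longrightarrow> leq F y z \<longrightarrow> leq F x z) \<and>
     (\<forall>a. upset F a \<longrightarrow>
        (\<forall>x y. rel F a x y \<longrightarrow> x \<in> carrier F \<and> y \<in> carrier F) \<and>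
        (\<forall>x y z. leq F x y \<longrightarrow> rel F a y z \<longrightarrow> (\<exists>w. rel F a x w \<and> leq F w z)))"

definition cautious :: "('w, 'm) cframe_scheme \<Rightarrow> bool" where
  "cautious F \<longleftrightarrow> cond_frame F \<and>
     (\<forall>x\<in>carrier F. \<forall>a b. upset F a \<longrightarrow> upset F b \<longrightarrow>
        img F a x \<subseteq> a \<and>
        (img F a x \<subseteq> b \<and> b \<subseteq> a \<longrightarrow> up F (img F a x) = up F (img F b x)))"

definition iCB_frame :: "('w, 'm) cframe_scheme \<Rightarrow> bool" where
  "iCB_frame F \<longleftrightarrow> cautious F \<and>
     (\<forall>x\<in>carrier F. \<forall>a b. upset F a \<longrightarrow> upset F b \<longrightarrow>
        img F a x \<subseteq> b \<longrightarrow> img F b x \<subseteq> a \<longrightarrow> up F (img F a x) = up F (img F b x)) \<and>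
     (\<forall>a. upset F a \<longrightarrow>
        (\<forall>x y z. rel F a x y \<longrightarrow> rel F a y z \<longrightarrow> (\<exists>w. rel F a x w \<and> leq F w z)))"

fun sat :: "('w, 'm) cframe_scheme \<Rightarrow> (nat \<Rightarrow> 'w set) \<Rightarrow> 'w \<Rightarrow> form \<Rightarrow> bool" where
  "sat F V x (Atom n) \<longleftrightarrow> x \<in> V n"
| "sat F V x Bot \<longleftrightarrow> False"
| "sat F V x (And a b) \<longleftrightarrow> sat F V x a \<and> sat F V x b"
| "sat F V x (Or a b) \<longleftrightarrow> sat F V x a \<or> sat F V x b"
| "sat F V x (Imp a b) \<longleftrightarrow>
     (\<forall>y\<in>carrier F. leq F x y \<longrightarrow> sat F V y a \<longrightarrow> sat F V y b)"
| "sat F V x (Cond a b) \<longleftrightarrow>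
     (\<forall>y. rel F {z \<in> carrier F. sat F V z a} x y \<longrightarrow> sat F V y b)"

definition valid :: "('w, 'm) cframe_scheme \<Rightarrow> form \<Rightarrow> bool" where
  "valid F a \<longleftrightarrow> (\<forall>V. (\<forall>n. upset F (V n)) \<longrightarrow> (\<forall>x\<in>carrier F. sat F V x a))"

end

theory Submission
  imports Defs
begin


lemma iCB_ipc: "a \<in> IPC \<Longrightarrow> a \<in> iCB"
  unfolding iCB_def by (rule ICK_plus.ipc)
lemma iCB_mp: "Imp a b \<in> iCB \<Longrightarrow> a \<in> iCB \<Longrightarrow> b \<in> iCB"
  unfolding iCB_def by (rule ICK_plus.mp)

inductive deriv :: "form set \<Rightarrow> form \<Rightarrow> bool" for G where
  dax: "a \<in> iCB \<Longrightarrow> deriv G a"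
| dhyp: "a \<in> G \<Longrightarrow> deriv G a"
| dmp: "deriv G (Imp a b) \<Longrightarrow> deriv G a \<Longrightarrow> deriv G b"

lemma deriv_empty: "deriv {} a \<Longrightarrow> a \<in> iCB"
  by (induction rule: deriv.induct) (auto intro: iCB_mp)

lemma deriv_mono: "deriv G a \<Longrightarrow> G \<subseteq> H \<Longrightarrow> deriv H a"
  by (induction rule: deriv.induct) (auto intro: deriv.intros)

lemma deriv_compact: "deriv G a \<Longrightarrow> \<exists>G0 \<subseteq> G. finite G0 \<and> deriv G0 a"
proof (induction rule: deriv.induct)
  case (dax a) then show ?case by (auto intro: deriv.dax)
next
  case (dhyp a) then show ?case by (auto intro!: exI[of _ "{a}"] deriv.dhyp)
next
  case (dmp a b)
  then obtain G1 G2 where "G1 \<subseteq> G" "finite G1" "deriv G1 (Imp a b)" "G2 \<subseteq> G" "finite G2" "deriv G2 a"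
    by blast
  then show ?case
    by (intro exI[of _ "G1 \<union> G2"]) (auto intro: deriv.dmp deriv_mono)
qed

lemma ipc_imp_self: "Imp a a \<in> IPC"
proof -
  have 1: "Imp (Imp a (Imp (Imp a a) a)) (Imp (Imp a (Imp a a)) (Imp a a)) \<in> IPC" by (rule IPC.s)
  have 2: "Imp a (Imp (Imp a a) a) \<in> IPC" by (rule IPC.k)
  have 3: "Imp a (Imp a a) \<in> IPC" by (rule IPC.k)
  show ?thesis using IPC.mp[OF IPC.mp[OF 1 2] 3] .
qed

lemma dipc: "a \<in> IPC \<Longrightarrow> deriv G a"
  by (rule deriv.dax, rule iCB_ipc)

lemma DT: "deriv (insert a G) b \<Longrightarrow> deriv G (Imp a b)"
proof (induction rule: deriv.induct)
  case (dax b) then show ?case using deriv.dmp[OF dipc[OF IPC.k] deriv.dax] by blast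
next
  case (dhyp b)
  then show ?case
  proof
    assume "b = a" then show ?thesis using dipc[OF ipc_imp_self] by simp
  next
    assume "b \<in> G" then show ?thesis using deriv.dmp[OF dipc[OF IPC.k] deriv.dhyp] by blast
  qed
next
  case (dmp b c)
  then show ?case using deriv.dmp[OF deriv.dmp[OF dipc[OF IPC.s]]] by blast
qed

lemma dimpE: "deriv G (Imp a b) \<Longrightarrow> deriv (insert a G) b"
  by (rule deriv.dmp[of _ a]) (auto intro: deriv_mono deriv.dhyp)

lemma dmp': "deriv G (Imp a b) \<Longrightarrow> deriv G a \<Longrightarrow> deriv G b" by (rule deriv.dmp)

lemma dandI: "deriv G a \<Longrightarrow> deriv G b \<Longrightarrow> deriv G (And a b)"
  using dmp'[OF dmp'[OF dipc[OF IPC.c3]]] by blast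
lemma dandE1: "deriv G (And a b) \<Longrightarrow> deriv G a"
  using dmp'[OF dipc[OF IPC.c1]] by blast
lemma dandE2: "deriv G (And a b) \<Longrightarrow> deriv G b"
  using dmp'[OF dipc[OF IPC.c2]] by blast
lemma dorI1: "deriv G a \<Longrightarrow> deriv G (Or a b)"
  using dmp'[OF dipc[OF IPC.d1]] by blast
lemma dorI2: "deriv G b \<Longrightarrow> deriv G (Or a b)"
  using dmp'[OF dipc[OF IPC.d2]] by blast
lemma dorE: "deriv G (Or a b) \<Longrightarrow> deriv (insert a G) c \<Longrightarrow> deriv (insert b G) c \<Longrightarrow> deriv G c"
proof -
  assume h: "deriv G (Or a b)" "deriv (insert a G) c" "deriv (insert b G) c"
  show ?thesis by (rule dmp'[OF dmp'[OF dmp'[OF dipc[OF IPC.d3] DT[OF h(2)]] DT[OF h(3)]] h(1)])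
qed
lemma dbotE: "deriv G Bot \<Longrightarrow> deriv G c"
  using dmp'[OF dipc[OF IPC.efq]] by blast
lemma dhyp': "a \<in> G \<Longrightarrow> deriv G a" by (rule deriv.dhyp)
lemma dins: "deriv (insert a G) a" by (rule deriv.dhyp) simp
lemma dcut: "deriv G a \<Longrightarrow> deriv (insert a G) b \<Longrightarrow> deriv G b"
  by (rule dmp'[OF DT])

lemma thm_deriv: "deriv {} a \<Longrightarrow> a \<in> iCB" by (rule deriv_empty)

definition thy :: "form set \<Rightarrow> bool" where
  "thy G \<longleftrightarrow> (\<forall>a. deriv G a \<longrightarrow> a \<in> G)"

definition primeth :: "form set \<Rightarrow> bool" where
  "primeth G \<longleftrightarrow> thy G \<and> Bot \<notin> G \<and> (\<forall>a b. Or a b \<in> G \<longrightarrow> a \<in> G \<or> b \<in> G)"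

lemma lindenbaum:
  assumes nd: "\<not> deriv G c"
  shows "\<exists>D. G \<subseteq> D \<and> primeth D \<and> c \<notin> D"
proof -
  let ?A = "{D. G \<subseteq> D \<and> \<not> deriv D c}"
  have "\<forall>C\<in>chains ?A. \<exists>U\<in>?A. \<forall>X\<in>C. X \<subseteq> U"
  proof
    fix C assume C: "C \<in> chains ?A"
    show "\<exists>U\<in>?A. \<forall>X\<in>C. X \<subseteq> U"
    proof (cases "C = {}")
      case True then show ?thesis using nd by auto
    next
      case False
      have "\<not> deriv (\<Union>C) c"
      proof
        assume "deriv (\<Union>C) c"
        then obtain G0 where G0: "G0 \<subseteq> \<Union>C" "finite G0" "deriv G0 c" using deriv_compact by blast
        have "subset.chain ?A C" using C by (simp add: chains_alt_def)
        then obtain B where "B \<in> C" "G0 \<subseteq> B"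
          using finite_subset_Union_chain[OF G0(2) G0(1) False] by blast
        then show False using G0(3) deriv_mono C unfolding chains_def by blast
      qed
      moreover have "G \<subseteq> \<Union>C" using False C unfolding chains_def by blast
      ultimately show ?thesis by blast
    qed
  qed
  then obtain M where M: "M \<in> ?A" and max: "\<forall>X\<in>?A. M \<subseteq> X \<longrightarrow> X = M"
    by (rule Zorn_Lemma2[of ?A, THEN bexE]) blast
  have ins: "a \<notin> M \<Longrightarrow> deriv (insert a M) c" for a
    using max M by (metis (no_types, lifting) insertI1 mem_Collect_eq subset_insertI subset_trans)
  have th: "thy M" unfolding thy_def
  proof (intro allI impI)
    fix a assume "deriv M a"
    then show "a \<in> M" using ins dcut M by blast
  qed
  have "Bot \<notin> M" using M dbotE dhyp' by blast
  moreover have "Or a b \<in> M \<Longrightarrow> a \<in> M \<or> b \<in> M" for a b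
    using ins dorE[OF dhyp'] M by blast
  moreover have "c \<notin> M" using M dhyp' by blast
  ultimately show ?thesis using M th unfolding primeth_def by blast
qed

lemma L_us: "a \<in> iCB \<Longrightarrow> subst s a \<in> iCB"
  unfolding iCB_def by (rule ICK_plus.us)
lemma L_gam: "a \<in> iCB_axioms \<Longrightarrow> a \<in> iCB"
  unfolding iCB_def by (rule ICK_plus.gam)
lemma L_congR: "Iff a b \<in> iCB \<Longrightarrow> Iff (Cond c a) (Cond c b) \<in> iCB"
  unfolding iCB_def by (rule ICK_plus.congR)

definition sub3 :: "form \<Rightarrow> form \<Rightarrow> form \<Rightarrow> nat \<Rightarrow> form" where
  "sub3 a b c = (\<lambda>n. if n = 0 then a else if n = 1 then b else c)"

lemma L_id: "Cond a a \<in> iCB"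
proof -
  have "Cond P P \<in> iCB" by (rule L_gam) (simp add: iCB_axioms_def iCC_axioms_def)
  from L_us[OF this, of "sub3 a a a"] show ?thesis by (simp add: sub3_def)
qed

lemma L_cso: "Imp (And (Cond a b) (And (Cond b a) (Cond a c))) (Cond b c) \<in> iCB"
proof -
  have "Imp (And (Cond P Q) (And (Cond Q P) (Cond P Rr))) (Cond Q Rr) \<in> iCB"
    by (rule L_gam) (simp add: iCB_axioms_def iCC_axioms_def)
  from L_us[OF this, of "sub3 a b c"] show ?thesis by (simp add: sub3_def)
qed

lemma L_4: "Imp (Cond a b) (Cond a (Cond a b)) \<in> iCB"
proof -
  have "Imp (Cond P Q) (Cond P (Cond P Q)) \<in> iCB"
    by (rule L_gam) (simp add: iCB_axioms_def iCC_axioms_def)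
  from L_us[OF this, of "sub3 a b b"] show ?thesis by (simp add: sub3_def)
qed

lemma L_cm: "Iff (Cond a (And b c)) (And (Cond a b) (Cond a c)) \<in> iCB"
proof -
  have "Iff (Cond P (And Q Rr)) (And (Cond P Q) (Cond P Rr)) \<in> iCB"
    unfolding iCB_def by (rule ICK_plus.cm)
  from L_us[OF this, of "sub3 a b c"] show ?thesis by (simp add: sub3_def Iff_def)
qed

lemma L_cn: "Iff (Cond a Top) Top \<in> iCB"
proof -
  have "Iff (Cond P Top) Top \<in> iCB"
    unfolding iCB_def by (rule ICK_plus.cn)
  from L_us[OF this, of "sub3 a a a"] show ?thesis by (simp add: sub3_def Iff_def Top_def)
qed

lemma L_top: "Top \<in> iCB"
  unfolding Top_def by (rule iCB_ipc[OF ipc_imp_self])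

lemma thy_L: "thy G \<Longrightarrow> a \<in> iCB \<Longrightarrow> a \<in> G"
  unfolding thy_def using deriv.dax by blast
lemma thy_mp: "thy G \<Longrightarrow> Imp a b \<in> G \<Longrightarrow> a \<in> G \<Longrightarrow> b \<in> G"
  unfolding thy_def using deriv.dmp deriv.dhyp by blast
lemma thy_Lmp: "thy G \<Longrightarrow> Imp a b \<in> iCB \<Longrightarrow> a \<in> G \<Longrightarrow> b \<in> G"
  using thy_mp thy_L by blast
lemma thy_and: "thy G \<Longrightarrow> And a b \<in> G \<longleftrightarrow> a \<in> G \<and> b \<in> G"
  unfolding thy_def by (meson dandI dandE1 dandE2 dhyp')
lemma thy_iff1: "thy G \<Longrightarrow> Iff a b \<in> iCB \<Longrightarrow> a \<in> G \<Longrightarrow> b \<in> G"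
  unfolding Iff_def by (rule thy_Lmp, assumption, rule deriv_empty, rule dandE1, rule deriv.dax)
lemma thy_iff2: "thy G \<Longrightarrow> Iff a b \<in> iCB \<Longrightarrow> b \<in> G \<Longrightarrow> a \<in> G"
  unfolding Iff_def by (rule thy_Lmp, assumption, rule deriv_empty, rule dandE2, rule deriv.dax)

lemma L_iff_top: "b \<in> iCB \<Longrightarrow> Iff b Top \<in> iCB"
  unfolding Iff_def
  by (rule thm_deriv, rule dandI, rule DT, rule deriv.dax, rule L_top, rule DT, rule deriv.dax)

lemma L_iff_and: "Imp x y \<in> iCB \<Longrightarrow> Iff x (And x y) \<in> iCB"
  unfolding Iff_def
  apply (rule thm_deriv, rule dandI)
   apply (rule DT, rule dandI, rule dins, rule dmp'[OF deriv.dax dins], assumption)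
  apply (rule DT, rule dandE1, rule dins)
  done

lemma L_mpand: "Imp (And (Imp b c) b) c \<in> iCB"
  by (rule thm_deriv, rule DT, rule dmp'[OF dandE1[OF dins] dandE2[OF dins]])

lemma cond_nec: "thy G \<Longrightarrow> b \<in> iCB \<Longrightarrow> Cond a b \<in> G"
proof -
  assume G: "thy G" and b: "b \<in> iCB"
  have "Cond a Top \<in> G" using thy_iff2[OF G L_cn] thy_L[OF G L_top] by blast
  then show ?thesis using thy_iff2[OF G L_congR[OF L_iff_top[OF b]]] by blast
qed

lemma cond_mono: "thy G \<Longrightarrow> Imp x y \<in> iCB \<Longrightarrow> Cond a x \<in> G \<Longrightarrow> Cond a y \<in> G"
proof -
  assume G: "thy G" and xy: "Imp x y \<in> iCB" and ax: "Cond a x \<in> G"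
  have "Cond a (And x y) \<in> G" using thy_iff1[OF G L_congR[OF L_iff_and[OF xy]] ax] .
  then show ?thesis using thy_iff1[OF G L_cm] thy_and[OF G] by blast
qed

lemma cond_conj: "thy G \<Longrightarrow> Cond a x \<in> G \<Longrightarrow> Cond a y \<in> G \<Longrightarrow> Cond a (And x y) \<in> G"
  using thy_iff2[OF _ L_cm] thy_and by metis

definition cset :: "form set \<Rightarrow> form \<Rightarrow> form set" where
  "cset G a = {b. Cond a b \<in> G}"

lemma cset_thy: assumes G: "thy G" shows "thy (cset G a)"
  unfolding thy_def
proof (intro allI impI)
  fix b assume "deriv (cset G a) b"
  then show "b \<in> cset G a"
  proof (induction rule: deriv.induct)
    case (dax b) then show ?case using cond_nec[OF G] unfolding cset_def by blast
  next
    case (dhyp b) then show ?case .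
  next
    case (dmp b c)
    then have "Cond a (And (Imp b c) b) \<in> G" using cond_conj[OF G] unfolding cset_def by blast
    then show ?case using cond_mono[OF G L_mpand] unfolding cset_def by blast
  qed
qed

lemma prime_or: "primeth G \<Longrightarrow> Or a b \<in> G \<longleftrightarrow> a \<in> G \<or> b \<in> G"
  unfolding primeth_def thy_def by (meson dorI1 dorI2 dhyp')

lemma prime_imp: "primeth G \<Longrightarrow> Imp a b \<in> G \<longleftrightarrow> (\<forall>D. primeth D \<and> G \<subseteq> D \<and> a \<in> D \<longrightarrow> b \<in> D)"
proof
  assume G: "primeth G" and "Imp a b \<in> G"
  then show "\<forall>D. primeth D \<and> G \<subseteq> D \<and> a \<in> D \<longrightarrow> b \<in> D"
    unfolding primeth_def by (meson subsetD thy_mp)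
next
  assume G: "primeth G" and h: "\<forall>D. primeth D \<and> G \<subseteq> D \<and> a \<in> D \<longrightarrow> b \<in> D"
  show "Imp a b \<in> G"
  proof (rule ccontr)
    assume "Imp a b \<notin> G"
    then have "\<not> deriv (insert a G) b" using DT G unfolding primeth_def thy_def by metis
    then obtain D where "insert a G \<subseteq> D" "primeth D" "b \<notin> D" using lindenbaum by blast
    then show False using h by blast
  qed
qed




definition CW :: "form set set set" where "CW = {{D} | D. primeth D}"
definition cleq :: "form set set \<Rightarrow> form set set \<Rightarrow> bool" where
  "cleq w v \<longleftrightarrow> w \<in> CW \<and> v \<in> CW \<and> \<Union>w \<subseteq> \<Union>v"
definition cext :: "form \<Rightarrow> form set set set" where "cext p = {w \<in> CW. p \<in> \<Union>w}"
definition fsel :: "form \<Rightarrow> form set set \<Rightarrow> form set set set" where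
  "fsel p w = {v \<in> CW. cset (\<Union>w) p \<subseteq> \<Union>v}"
definition wit :: "form set set set \<Rightarrow> form set set \<Rightarrow> form \<Rightarrow> bool" where
  "wit a w p \<longleftrightarrow> fsel p w \<subseteq> a \<and> a \<subseteq> cext p"
definition sel :: "form set set set \<Rightarrow> form set set \<Rightarrow> form set set set" where
  "sel a w = (if \<exists>p. wit a w p then fsel (SOME p. wit a w p) w else a)"
definition crel :: "form set set set \<Rightarrow> form set set \<Rightarrow> form set set \<Rightarrow> bool" where
  "crel a w v \<longleftrightarrow> w \<in> CW \<and> v \<in> CW \<and> v \<in> sel a w"
definition CF :: "form set set cframe" where
  "CF = \<lparr>carrier = CW, leq = cleq, rel = crel\<rparr>"

lemma CW_prime: "w \<in> CW \<Longrightarrow> primeth (\<Union>w)"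
  unfolding CW_def by auto
lemma CW_thy: "w \<in> CW \<Longrightarrow> thy (\<Union>w)"
  using CW_prime primeth_def by blast
lemma CW_I: "primeth D \<Longrightarrow> {D} \<in> CW"
  unfolding CW_def by auto

lemma DER: assumes w: "w \<in> CW" shows "fsel p w \<subseteq> cext q \<longleftrightarrow> Cond p q \<in> \<Union>w"
proof
  assume h: "fsel p w \<subseteq> cext q"
  show "Cond p q \<in> \<Union>w"
  proof (rule ccontr)
    assume "Cond p q \<notin> \<Union>w"
    then have nq: "q \<notin> cset (\<Union>w) p" unfolding cset_def by simp
    have "thy (cset (\<Union>w) p)" by (rule cset_thy[OF CW_thy[OF w]])
    then have "\<not> deriv (cset (\<Union>w) p) q" using nq unfolding thy_def by blast
    then obtain D where D: "cset (\<Union>w) p \<subseteq> D" "primeth D" "q \<notin> D" using lindenbaum by blast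
    have DC: "{D} \<in> CW" by (rule CW_I[OF D(2)])
    then have "{D} \<in> fsel p w" unfolding fsel_def using D(1) by simp
    then have "{D} \<in> cext q" using h by blast
    then have "q \<in> D" unfolding cext_def by simp
    then show False using D(3) by simp
  qed
next
  assume "Cond p q \<in> \<Union>w"
  then show "fsel p w \<subseteq> cext q" unfolding fsel_def cext_def cset_def by auto
qed

lemma fsel_sub: "fsel p w \<subseteq> CW" unfolding fsel_def by auto

lemma fsel_id: "w \<in> CW \<Longrightarrow> fsel p w \<subseteq> cext p"
proof -
  assume w: "w \<in> CW"
  have "Cond p p \<in> \<Union>w" by (rule thy_L[OF CW_thy[OF w] L_id])
  then show ?thesis using DER[OF w] by simp
qed

lemma KEY:
  assumes w: "w \<in> CW" and h1: "fsel p w \<subseteq> cext q" and h2: "fsel q w \<subseteq> cext p"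
  shows "fsel p w = fsel q w"
proof -
  have pq: "Cond p q \<in> \<Union>w" and qp: "Cond q p \<in> \<Union>w" using h1 h2 DER[OF w] by auto
  have T: "thy (\<Union>w)" by (rule CW_thy[OF w])
  have "cset (\<Union>w) p = cset (\<Union>w) q"
  proof (intro set_eqI iffI)
    fix c assume "c \<in> cset (\<Union>w) p"
    then have "Cond p c \<in> \<Union>w" unfolding cset_def by simp
    then have "And (Cond p q) (And (Cond q p) (Cond p c)) \<in> \<Union>w" using pq qp thy_and[OF T] by blast
    then show "c \<in> cset (\<Union>w) q" using thy_Lmp[OF T L_cso] unfolding cset_def by blast
  next
    fix c assume "c \<in> cset (\<Union>w) q"
    then have "Cond q c \<in> \<Union>w" unfolding cset_def by simp
    then have "And (Cond q p) (And (Cond p q) (Cond q c)) \<in> \<Union>w" using pq qp thy_and[OF T] by blast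
    then show "c \<in> cset (\<Union>w) p" using thy_Lmp[OF T L_cso] unfolding cset_def by blast
  qed
  then show ?thesis unfolding fsel_def by simp
qed

lemma fsel_mono: "\<Union>w \<subseteq> \<Union>w' \<Longrightarrow> fsel p w' \<subseteq> fsel p w"
  unfolding fsel_def cset_def by auto

lemma fsel_T: assumes w: "w \<in> CW" and v: "v \<in> fsel p w" shows "fsel p v \<subseteq> fsel p w"
proof
  fix u assume u: "u \<in> fsel p v"
  have "cset (\<Union>w) p \<subseteq> \<Union>u"
  proof
    fix c assume "c \<in> cset (\<Union>w) p"
    then have "Cond p (Cond p c) \<in> \<Union>w" using thy_Lmp[OF CW_thy[OF w] L_4] unfolding cset_def by blast
    then have "Cond p c \<in> \<Union>v" using v unfolding fsel_def cset_def by blast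
    then show "c \<in> \<Union>u" using u unfolding fsel_def cset_def by blast
  qed
  then show "u \<in> fsel p w" using u unfolding fsel_def by blast
qed

lemma fsel_up: "v \<in> fsel p w \<Longrightarrow> cleq v u \<Longrightarrow> u \<in> fsel p w"
  unfolding fsel_def cleq_def by auto

lemma sel_wit: assumes w: "w \<in> CW" and h: "wit a w p" shows "sel a w = fsel p w"
proof -
  have ex: "\<exists>p. wit a w p" using h by blast
  define p' where "p' = (SOME p. wit a w p)"
  have s: "wit a w p'" unfolding p'_def using someI_ex[OF ex] .
  have s1: "fsel p' w \<subseteq> a" and s2: "a \<subseteq> cext p'" using s unfolding wit_def by simp_all
  have h1: "fsel p w \<subseteq> a" and h2: "a \<subseteq> cext p" using h unfolding wit_def by simp_all
  have "fsel p' w \<subseteq> cext p" using s1 h2 by (rule subset_trans)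
  moreover have "fsel p w \<subseteq> cext p'" using h1 s2 by (rule subset_trans)
  ultimately have "fsel p' w = fsel p w" by (rule KEY[OF w])
  then show ?thesis unfolding sel_def p'_def using ex by simp
qed

lemma sel_nowit: "\<not> (\<exists>p. wit a w p) \<Longrightarrow> sel a w = a"
  unfolding sel_def by (simp only: if_False)

lemma sel_sub: assumes w: "w \<in> CW" shows "sel a w \<subseteq> a"
proof (cases "\<exists>p. wit a w p")
  case True
  then obtain p where p: "wit a w p" by blast
  show ?thesis unfolding sel_wit[OF w p] using p unfolding wit_def by simp
next
  case False then show ?thesis unfolding sel_nowit[OF False] by simp
qed

lemma sel_ext: assumes w: "w \<in> CW" shows "sel (cext p) w = fsel p w"
proof -
  have "wit (cext p) w p" unfolding wit_def using fsel_id[OF w] by simp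
  then show ?thesis by (rule sel_wit[OF w])
qed

lemma up_CF: "upset CF a \<longleftrightarrow> a \<subseteq> CW \<and> (\<forall>x\<in>a. \<forall>y\<in>CW. cleq x y \<longrightarrow> y \<in> a)"
  unfolding upset_def CF_def by simp

lemma sel_upset: "upset CF a \<Longrightarrow> w \<in> CW \<Longrightarrow> upset CF (sel a w)"
proof -
  assume a: "upset CF a" and w: "w \<in> CW"
  show ?thesis
  proof (cases "\<exists>p. wit a w p")
    case True
    then obtain p where "wit a w p" by blast
    then show ?thesis using sel_wit[OF w] fsel_sub fsel_up unfolding up_CF by metis
  next
    case False then show ?thesis using sel_nowit a by simp
  qed
qed

lemma up_upset: assumes "upset CF S" shows "up CF S = S"
proof -
  have "S \<subseteq> CW" "\<forall>x\<in>S. \<forall>y\<in>CW. cleq x y \<longrightarrow> y \<in> S" using assms unfolding up_CF by auto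
  then show ?thesis unfolding up_def by (auto simp: CF_def cleq_def)
qed

lemma img_CF: assumes w: "w \<in> CW" and a: "upset CF a" shows "img CF a w = sel a w"
proof -
  have "sel a w \<subseteq> CW" using sel_sub[OF w] a unfolding up_CF by blast
  then show ?thesis unfolding img_def using w by (auto simp: CF_def crel_def)
qed

lemma sel_back: assumes a: "upset CF a" and w: "w \<in> CW" and w': "w' \<in> CW" and le: "\<Union>w \<subseteq> \<Union>w'"
  shows "sel a w' \<subseteq> sel a w"
proof (cases "\<exists>p. wit a w p")
  case True
  then obtain p where p: "wit a w p" by blast
  have "fsel p w' \<subseteq> fsel p w" by (rule fsel_mono[OF le])
  then have p': "wit a w' p" using p unfolding wit_def by blast
  show ?thesis using sel_wit[OF w p] sel_wit[OF w' p'] fsel_mono[OF le] by simp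
next
  case False then show ?thesis using sel_nowit sel_sub[OF w'] by simp
qed

lemma sel_T: assumes a: "upset CF a" and w: "w \<in> CW" and v: "v \<in> sel a w"
  shows "sel a v \<subseteq> sel a w"
proof (cases "\<exists>p. wit a w p")
  case True
  then obtain p where p: "wit a w p" by blast
  have vf: "v \<in> fsel p w" using v sel_wit[OF w p] by simp
  have vC: "v \<in> CW" using vf fsel_sub by blast
  have sub: "fsel p v \<subseteq> fsel p w" by (rule fsel_T[OF w vf])
  then have p': "wit a v p" using p unfolding wit_def by blast
  show ?thesis using sel_wit[OF w p] sel_wit[OF vC p'] sub by simp
next
  case False
  have "v \<in> CW" using v sel_nowit[OF False] a unfolding up_CF by auto
  then show ?thesis using sel_nowit[OF False] sel_sub by simp
qed

lemma sel_cso: assumes a: "upset CF a" and b: "upset CF b" and w: "w \<in> CW"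
  and ab: "sel a w \<subseteq> b" and ba: "sel b w \<subseteq> a"
  shows "sel a w = sel b w"
proof (cases "\<exists>p. wit a w p")
  case True
  then obtain p where p: "wit a w p" by blast
  have sa: "sel a w = fsel p w" by (rule sel_wit[OF w p])
  have ap: "a \<subseteq> cext p" using p unfolding wit_def by (elim conjE)
  show ?thesis
  proof (cases "\<exists>q. wit b w q")
    case True
    then obtain q where q: "wit b w q" by blast
    have sb: "sel b w = fsel q w" by (rule sel_wit[OF w q])
    have bq: "b \<subseteq> cext q" using q unfolding wit_def by (elim conjE)
    have 1: "fsel p w \<subseteq> cext q" using ab bq sa by (metis subset_trans)
    have 2: "fsel q w \<subseteq> cext p" using ba ap sb by (metis subset_trans)
    show ?thesis using KEY[OF w 1 2] sa sb by simp
  next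
    case False
    have sb: "sel b w = b" by (rule sel_nowit[OF False])
    have "wit b w p" unfolding wit_def
    proof
      show "fsel p w \<subseteq> b" using ab sa by simp
      show "b \<subseteq> cext p" using ba sb ap by (metis subset_trans)
    qed
    then show ?thesis using False by blast
  qed
next
  case False
  have sa: "sel a w = a" by (rule sel_nowit[OF False])
  show ?thesis
  proof (cases "\<exists>q. wit b w q")
    case True
    then obtain q where q: "wit b w q" by blast
    have sb: "sel b w = fsel q w" by (rule sel_wit[OF w q])
    have bq: "b \<subseteq> cext q" using q unfolding wit_def by (elim conjE)
    have "wit a w q" unfolding wit_def
    proof
      show "fsel q w \<subseteq> a" using ba sb by simp
      show "a \<subseteq> cext q" using ab sa bq by (metis subset_trans)
    qed
    then show ?thesis using False by blast
  next
    case F2: False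
    show ?thesis using ab ba sa sel_nowit[OF F2] by simp
  qed
qed

lemma CF_carrier: "carrier CF = CW" by (simp add: CF_def)
lemma CF_leq: "leq CF = cleq" by (simp add: CF_def)
lemma CF_rel: "rel CF = crel" by (simp add: CF_def)

lemma CF_cond: assumes ne: "CW \<noteq> {}" shows "cond_frame CF"
proof -
  have c1: "carrier CF \<noteq> {}" unfolding CF_carrier by (rule ne)
  have c2: "\<forall>x y. leq CF x y \<longrightarrow> x \<in> carrier CF \<and> y \<in> carrier CF"
    unfolding CF_carrier CF_leq cleq_def by blast
  have c3: "\<forall>x\<in>carrier CF. leq CF x x"
    unfolding CF_carrier CF_leq cleq_def by blast
  have c4: "\<forall>x y z. leq CF x y \<longrightarrow> leq CF y z \<longrightarrow> leq CF x z"
    unfolding CF_carrier CF_leq cleq_def by blast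
  have c5: "\<forall>a. upset CF a \<longrightarrow>
        (\<forall>x y. rel CF a x y \<longrightarrow> x \<in> carrier CF \<and> y \<in> carrier CF) \<and>
        (\<forall>x y z. leq CF x y \<longrightarrow> rel CF a y z \<longrightarrow> (\<exists>w. rel CF a x w \<and> leq CF w z))"
  proof (intro allI impI)
    fix a assume a: "upset CF a"
    show "(\<forall>x y. rel CF a x y \<longrightarrow> x \<in> carrier CF \<and> y \<in> carrier CF) \<and>
        (\<forall>x y z. leq CF x y \<longrightarrow> rel CF a y z \<longrightarrow> (\<exists>w. rel CF a x w \<and> leq CF w z))"
    proof (rule conjI)
      show "\<forall>x y. rel CF a x y \<longrightarrow> x \<in> carrier CF \<and> y \<in> carrier CF"
        unfolding CF_carrier CF_rel crel_def by blast
    next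
      show "\<forall>x y z. leq CF x y \<longrightarrow> rel CF a y z \<longrightarrow> (\<exists>w. rel CF a x w \<and> leq CF w z)"
      proof (intro allI impI)
        fix x y z assume xy: "leq CF x y" and yz: "rel CF a y z"
        have x: "x \<in> CW" and y: "y \<in> CW" and le: "\<Union>x \<subseteq> \<Union>y" using xy unfolding CF_leq cleq_def by auto
        have z: "z \<in> CW" and zs: "z \<in> sel a y" using yz unfolding CF_rel crel_def by auto
        have "z \<in> sel a x" using sel_back[OF a x y le] zs by blast
        then have "rel CF a x z" unfolding CF_rel crel_def using x z by blast
        moreover have "leq CF z z" unfolding CF_leq cleq_def using z by blast
        ultimately show "\<exists>w. rel CF a x w \<and> leq CF w z" by blast
      qed
    qed
  qed
  show ?thesis unfolding cond_frame_def by (intro conjI c1 c2 c3 c4 c5)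
qed

lemma CF_frame: assumes ne: "CW \<noteq> {}" shows "iCB_frame CF"
proof -
  have cf: "cond_frame CF" by (rule CF_cond[OF ne])
  have cso: "up CF (img CF a x) = up CF (img CF b x)"
    if x: "x \<in> CW" and a: "upset CF a" and b: "upset CF b" and ab: "img CF a x \<subseteq> b"
      and ba: "img CF b x \<subseteq> a" for x a b
  proof -
    have "sel a x = sel b x"
      using sel_cso[OF a b x] ab ba unfolding img_CF[OF x a] img_CF[OF x b] by blast
    then show ?thesis unfolding img_CF[OF x a] img_CF[OF x b] by simp
  qed
  have k1: "\<forall>x\<in>carrier CF. \<forall>a b. upset CF a \<longrightarrow> upset CF b \<longrightarrow>
        img CF a x \<subseteq> a \<and>
        (img CF a x \<subseteq> b \<and> b \<subseteq> a \<longrightarrow> up CF (img CF a x) = up CF (img CF b x))"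
  proof (intro ballI allI impI conjI)
    fix x a b assume x: "x \<in> carrier CF" and a: "upset CF a" and b: "upset CF b"
    have xC: "x \<in> CW" using x unfolding CF_carrier .
    show "img CF a x \<subseteq> a" unfolding img_CF[OF xC a] by (rule sel_sub[OF xC])
  next
    fix x a b assume x: "x \<in> carrier CF" and a: "upset CF a" and b: "upset CF b"
      and h: "img CF a x \<subseteq> b \<and> b \<subseteq> a"
    have xC: "x \<in> CW" using x unfolding CF_carrier .
    have "img CF b x \<subseteq> a" unfolding img_CF[OF xC b] using sel_sub[OF xC, of b] h by blast
    then show "up CF (img CF a x) = up CF (img CF b x)" using cso[OF xC a b] h by blast
  qed
  have caut: "cautious CF" unfolding cautious_def by (intro conjI cf k1)
  have k2: "\<forall>x\<in>carrier CF. \<forall>a b. upset CF a \<longrightarrow> upset CF b \<longrightarrow>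
        img CF a x \<subseteq> b \<longrightarrow> img CF b x \<subseteq> a \<longrightarrow> up CF (img CF a x) = up CF (img CF b x)"
  proof (intro ballI allI impI)
    fix x a b assume x: "x \<in> carrier CF" and a: "upset CF a" and b: "upset CF b"
      and h1: "img CF a x \<subseteq> b" and h2: "img CF b x \<subseteq> a"
    have xC: "x \<in> CW" using x unfolding CF_carrier .
    show "up CF (img CF a x) = up CF (img CF b x)" by (rule cso[OF xC a b h1 h2])
  qed
  have k3: "\<forall>a. upset CF a \<longrightarrow>
        (\<forall>x y z. rel CF a x y \<longrightarrow> rel CF a y z \<longrightarrow> (\<exists>w. rel CF a x w \<and> leq CF w z))"
  proof (intro allI impI)
    fix a x y z assume a: "upset CF a" and xy: "rel CF a x y" and yz: "rel CF a y z"
    have x: "x \<in> CW" and ys: "y \<in> sel a x" using xy unfolding CF_rel crel_def by auto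
    have z: "z \<in> CW" and zs: "z \<in> sel a y" using yz unfolding CF_rel crel_def by auto
    have "z \<in> sel a x" using sel_T[OF a x ys] zs by blast
    then have "rel CF a x z" unfolding CF_rel crel_def using x z by blast
    moreover have "leq CF z z" unfolding CF_leq cleq_def using z by blast
    ultimately show "\<exists>w. rel CF a x w \<and> leq CF w z" by blast
  qed
  show ?thesis unfolding iCB_frame_def by (intro conjI caut k2 k3)
qed

lemma cext_upset: "upset CF (cext p)"
  unfolding upset_def CF_carrier CF_leq cext_def cleq_def by blast

lemma CW_cases: "w \<in> CW \<Longrightarrow> \<exists>D. w = {D} \<and> primeth D"
  unfolding CW_def by blast

lemma truth:
  "w \<in> CW \<Longrightarrow> sat CF (\<lambda>n. cext (Atom n)) w \<phi> \<longleftrightarrow> \<phi> \<in> \<Union>w"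
proof (induction \<phi> arbitrary: w)
  case (Atom n) then show ?case unfolding sat.simps cext_def by simp
next
  case Bot
  have "Bot \<notin> \<Union>w" using CW_prime[OF Bot.prems] unfolding primeth_def by blast
  then show ?case by simp
next
  case (And a b)
  show ?case unfolding sat.simps And.IH[OF And.prems] thy_and[OF CW_thy[OF And.prems]] ..
next
  case (Or a b)
  show ?case unfolding sat.simps Or.IH[OF Or.prems] prime_or[OF CW_prime[OF Or.prems]] ..
next
  case (Imp a b)
  have w: "w \<in> CW" by (rule Imp.prems)
  have "sat CF (\<lambda>n. cext (Atom n)) w (Imp a b) \<longleftrightarrow>
        (\<forall>v\<in>CW. \<Union>w \<subseteq> \<Union>v \<longrightarrow> a \<in> \<Union>v \<longrightarrow> b \<in> \<Union>v)"
  proof -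
    have "sat CF (\<lambda>n. cext (Atom n)) w (Imp a b) \<longleftrightarrow>
        (\<forall>v\<in>CW. cleq w v \<longrightarrow> sat CF (\<lambda>n. cext (Atom n)) v a \<longrightarrow> sat CF (\<lambda>n. cext (Atom n)) v b)"
      unfolding sat.simps(5) CF_carrier CF_leq ..
    also have "\<dots> \<longleftrightarrow> (\<forall>v\<in>CW. \<Union>w \<subseteq> \<Union>v \<longrightarrow> a \<in> \<Union>v \<longrightarrow> b \<in> \<Union>v)"
    proof (rule ball_cong[OF refl])
      fix v assume v: "v \<in> CW"
      show "(cleq w v \<longrightarrow> sat CF (\<lambda>n. cext (Atom n)) v a \<longrightarrow> sat CF (\<lambda>n. cext (Atom n)) v b) \<longleftrightarrow>
            (\<Union>w \<subseteq> \<Union>v \<longrightarrow> a \<in> \<Union>v \<longrightarrow> b \<in> \<Union>v)"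
        unfolding Imp.IH(1)[OF v] Imp.IH(2)[OF v] cleq_def using w v by simp
    qed
    finally show ?thesis .
  qed
  also have "\<dots> \<longleftrightarrow> (\<forall>D. primeth D \<and> \<Union>w \<subseteq> D \<and> a \<in> D \<longrightarrow> b \<in> D)"
  proof
    assume h: "\<forall>v\<in>CW. \<Union>w \<subseteq> \<Union>v \<longrightarrow> a \<in> \<Union>v \<longrightarrow> b \<in> \<Union>v"
    show "\<forall>D. primeth D \<and> \<Union>w \<subseteq> D \<and> a \<in> D \<longrightarrow> b \<in> D"
    proof (intro allI impI)
      fix D assume "primeth D \<and> \<Union>w \<subseteq> D \<and> a \<in> D"
      then show "b \<in> D" using h[rule_format, OF CW_I[of D]] by simp
    qed
  next
    assume h: "\<forall>D. primeth D \<and> \<Union>w \<subseteq> D \<and> a \<in> D \<longrightarrow> b \<in> D"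
    show "\<forall>v\<in>CW. \<Union>w \<subseteq> \<Union>v \<longrightarrow> a \<in> \<Union>v \<longrightarrow> b \<in> \<Union>v"
    proof (intro ballI impI)
      fix v assume v: "v \<in> CW" and "\<Union>w \<subseteq> \<Union>v" "a \<in> \<Union>v"
      then show "b \<in> \<Union>v" using h CW_prime[OF v] by blast
    qed
  qed
  also have "\<dots> \<longleftrightarrow> Imp a b \<in> \<Union>w" using prime_imp[OF CW_prime[OF w]] by simp
  finally show ?case .
next
  case (Cond a b)
  have w: "w \<in> CW" by (rule Cond.prems)
  have e: "{z \<in> carrier CF. sat CF (\<lambda>n. cext (Atom n)) z a} = cext a"
  proof (rule set_eqI)
    fix z show "z \<in> {z \<in> carrier CF. sat CF (\<lambda>n. cext (Atom n)) z a} \<longleftrightarrow> z \<in> cext a"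
    proof (cases "z \<in> CW")
      case True then show ?thesis using Cond.IH(1)[OF True] by (simp add: CF_carrier cext_def)
    next
      case False then show ?thesis by (simp add: CF_carrier cext_def)
    qed
  qed
  have "sat CF (\<lambda>n. cext (Atom n)) w (Cond a b) \<longleftrightarrow>
        (\<forall>v. crel (cext a) w v \<longrightarrow> sat CF (\<lambda>n. cext (Atom n)) v b)"
    unfolding sat.simps(6) e CF_rel ..
  also have "\<dots> \<longleftrightarrow> (\<forall>v\<in>fsel a w. b \<in> \<Union>v)"
  proof
    assume h: "\<forall>v. crel (cext a) w v \<longrightarrow> sat CF (\<lambda>n. cext (Atom n)) v b"
    show "\<forall>v\<in>fsel a w. b \<in> \<Union>v"
    proof
      fix v assume vf: "v \<in> fsel a w"
      have v: "v \<in> CW" using vf fsel_sub by blast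
      have "crel (cext a) w v" unfolding crel_def sel_ext[OF w] using w v vf by simp
      then have "sat CF (\<lambda>n. cext (Atom n)) v b" using h by simp
      then show "b \<in> \<Union>v" using Cond.IH(2)[OF v] by simp
    qed
  next
    assume h: "\<forall>v\<in>fsel a w. b \<in> \<Union>v"
    show "\<forall>v. crel (cext a) w v \<longrightarrow> sat CF (\<lambda>n. cext (Atom n)) v b"
    proof (intro allI impI)
      fix v assume "crel (cext a) w v"
      then have v: "v \<in> CW" and vf: "v \<in> fsel a w" unfolding crel_def sel_ext[OF w] by simp_all
      have "b \<in> \<Union>v" using h vf by blast
      then show "sat CF (\<lambda>n. cext (Atom n)) v b" using Cond.IH(2)[OF v] by simp
    qed
  qed
  also have "\<dots> \<longleftrightarrow> fsel a w \<subseteq> cext b"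
    unfolding cext_def using fsel_sub by auto
  also have "\<dots> \<longleftrightarrow> Cond a b \<in> \<Union>w" by (rule DER[OF w])
  finally show ?case .
qed

lemma completeness:
  assumes v: "\<forall>F :: form set set cframe. iCB_frame F \<longrightarrow> valid F a"
  shows "a \<in> iCB"
proof (rule ccontr)
  assume na: "a \<notin> iCB"
  have "\<not> deriv {} a" using deriv_empty na by metis
  then obtain D where D: "primeth D" "a \<notin> D" using lindenbaum by blast
  have DC: "{D} \<in> CW" by (rule CW_I[OF D(1)])
  then have ne: "CW \<noteq> {}" by blast
  have "valid CF a" using v CF_frame[OF ne] by simp
  then have "(\<forall>n. upset CF (cext (Atom n))) \<longrightarrow> (\<forall>x\<in>carrier CF. sat CF (\<lambda>n. cext (Atom n)) x a)"
    unfolding valid_def by (rule allE)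
  then have "\<forall>x\<in>carrier CF. sat CF (\<lambda>n. cext (Atom n)) x a" using cext_upset by simp
  then have "sat CF (\<lambda>n. cext (Atom n)) {D} a" using DC unfolding CF_carrier by simp
  then have "a \<in> D" using truth[OF DC] by simp
  then show False using D(2) by simp
qed



lemma cf_ne: "cond_frame F \<Longrightarrow> carrier F \<noteq> {}"
  by (unfold cond_frame_def, elim conjE, assumption)
lemma cf_leq0: "cond_frame F \<Longrightarrow> \<forall>x y. leq F x y \<longrightarrow> x \<in> carrier F \<and> y \<in> carrier F"
  by (unfold cond_frame_def, elim conjE, assumption)
lemma cf_refl0: "cond_frame F \<Longrightarrow> \<forall>x\<in>carrier F. leq F x x"
  by (unfold cond_frame_def, elim conjE, assumption)
lemma cf_trans0: "cond_frame F \<Longrightarrow> \<forall>x y z. leq F x y \<longrightarrow> leq F y z \<longrightarrow> leq F x z"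
  by (unfold cond_frame_def, elim conjE, assumption)
lemma cf_rel0: "cond_frame F \<Longrightarrow> \<forall>a. upset F a \<longrightarrow>
        (\<forall>x y. rel F a x y \<longrightarrow> x \<in> carrier F \<and> y \<in> carrier F) \<and>
        (\<forall>x y z. leq F x y \<longrightarrow> rel F a y z \<longrightarrow> (\<exists>w. rel F a x w \<and> leq F w z))"
  by (unfold cond_frame_def, elim conjE, assumption)

lemma cf_leq: "cond_frame F \<Longrightarrow> leq F x y \<Longrightarrow> x \<in> carrier F \<and> y \<in> carrier F"
  using cf_leq0 by metis
lemma cf_refl: "cond_frame F \<Longrightarrow> x \<in> carrier F \<Longrightarrow> leq F x x"
  using cf_refl0 by metis
lemma cf_trans: "cond_frame F \<Longrightarrow> leq F x y \<Longrightarrow> leq F y z \<Longrightarrow> leq F x z"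
  using cf_trans0 by metis
lemma cf_rel: "cond_frame F \<Longrightarrow> upset F a \<Longrightarrow> rel F a x y \<Longrightarrow> x \<in> carrier F \<and> y \<in> carrier F"
  using cf_rel0 by metis
lemma cf_back: "cond_frame F \<Longrightarrow> upset F a \<Longrightarrow> leq F x y \<Longrightarrow> rel F a y z \<Longrightarrow> \<exists>w. rel F a x w \<and> leq F w z"
  using cf_rel0 by metis

lemma persist:
  assumes cf: "cond_frame F" and V: "\<forall>n. upset F (V n)"
  shows "leq F x y \<Longrightarrow> sat F V x \<phi> \<Longrightarrow> sat F V y \<phi>"
proof (induction \<phi> arbitrary: x y)
  case (Atom n)
  have "x \<in> V n" using Atom.prems(2) by simp
  moreover have "y \<in> carrier F" using cf_leq[OF cf Atom.prems(1)] by blast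
  ultimately show ?case using V Atom.prems(1) unfolding upset_def by simp
next
  case Bot then show ?case by simp
next
  case (And a b) then show ?case by (metis sat.simps(3))
next
  case (Or a b) then show ?case by (metis sat.simps(4))
next
  case (Imp a b)
  show ?case unfolding sat.simps
  proof (intro ballI impI)
    fix z assume "z \<in> carrier F" "leq F y z" "sat F V z a"
    moreover have "leq F x z" using cf_trans[OF cf Imp.prems(1)] \<open>leq F y z\<close> by blast
    ultimately show "sat F V z b" using Imp.prems(2) by simp
  qed
next
  case (Cond a b)
  have up: "upset F {z \<in> carrier F. sat F V z a}"
    unfolding upset_def using Cond.IH(1) by blast
  show ?case unfolding sat.simps
  proof (intro allI impI)
    fix z assume "rel F {z \<in> carrier F. sat F V z a} y z"
    then obtain w where "rel F {z \<in> carrier F. sat F V z a} x w" "leq F w z"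
      using cf_back[OF cf up Cond.prems(1)] by blast
    then show "sat F V z b" using Cond.prems(2) Cond.IH(2) by simp
  qed
qed


lemma ext_upset:
  assumes cf: "cond_frame F" and V: "\<forall>n. upset F (V n)"
  shows "upset F {z \<in> carrier F. sat F V z \<phi>}"
  unfolding upset_def
proof (intro conjI ballI impI)
  show "{z \<in> carrier F. sat F V z \<phi>} \<subseteq> carrier F" by blast
next
  fix x y assume "x \<in> {z \<in> carrier F. sat F V z \<phi>}" "y \<in> carrier F" "leq F x y"
  then show "y \<in> {z \<in> carrier F. sat F V z \<phi>}" using persist[OF cf V, of x y \<phi>] by simp
qed

lemma sat_subst:
  assumes cf: "cond_frame F" and V: "\<forall>n. upset F (V n)"
  shows "x \<in> carrier F \<Longrightarrow> sat F V x (subst s \<phi>) = sat F (\<lambda>n. {z \<in> carrier F. sat F V z (s n)}) x \<phi>"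
proof (induction \<phi> arbitrary: x)
  case (Atom n) then show ?case by simp
next
  case Bot then show ?case by simp
next
  case (And a b) then show ?case by simp
next
  case (Or a b) then show ?case by simp
next
  case (Imp a b) then show ?case by (simp add: Imp.IH)
next
  case (Cond a b)
  let ?V' = "\<lambda>n. {z \<in> carrier F. sat F V z (s n)}"
  have eq: "{z \<in> carrier F. sat F V z (subst s a)} = {z \<in> carrier F. sat F ?V' z a}"
    using Cond.IH(1) by blast
  have up: "upset F {z \<in> carrier F. sat F V z (subst s a)}" by (rule ext_upset[OF cf V])
  have yC: "\<And>y. rel F {z \<in> carrier F. sat F ?V' z a} x y \<Longrightarrow> y \<in> carrier F"
    using cf_rel[OF cf up] unfolding eq by blast
  have "sat F V x (subst s (Cond a b)) = (\<forall>y. rel F {z \<in> carrier F. sat F ?V' z a} x y \<longrightarrow> sat F V y (subst s b))"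
    unfolding subst.simps sat.simps eq by (rule refl)
  also have "\<dots> = (\<forall>y. rel F {z \<in> carrier F. sat F ?V' z a} x y \<longrightarrow> sat F ?V' y b)"
  proof (intro iffI allI impI)
    fix y assume h: "\<forall>y. rel F {z \<in> carrier F. sat F ?V' z a} x y \<longrightarrow> sat F V y (subst s b)"
      and r: "rel F {z \<in> carrier F. sat F ?V' z a} x y"
    show "sat F ?V' y b" using h r Cond.IH(2)[OF yC[OF r]] by blast
  next
    fix y assume h: "\<forall>y. rel F {z \<in> carrier F. sat F ?V' z a} x y \<longrightarrow> sat F ?V' y b"
      and r: "rel F {z \<in> carrier F. sat F ?V' z a} x y"
    show "sat F V y (subst s b)" using h r Cond.IH(2)[OF yC[OF r]] by blast
  qed
  also have "\<dots> = sat F ?V' x (Cond a b)" by simp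
  finally show ?case .
qed

lemma valid_subst:
  assumes cf: "cond_frame F" and v: "valid F \<phi>"
  shows "valid F (subst s \<phi>)"
  unfolding valid_def
proof (intro allI impI ballI)
  fix V :: "nat \<Rightarrow> _" and x assume V: "\<forall>n. upset F (V n)" and x: "x \<in> carrier F"
  define V' where "V' = (\<lambda>n. {z \<in> carrier F. sat F V z (s n)})"
  have V': "\<forall>n. upset F (V' n)" unfolding V'_def using ext_upset[OF cf V] by blast
  have "(\<forall>n. upset F (V' n)) \<longrightarrow> (\<forall>x\<in>carrier F. sat F V' x \<phi>)"
    using v unfolding valid_def by (rule allE)
  then have "sat F V' x \<phi>" using V' x by blast
  then show "sat F V x (subst s \<phi>)" using sat_subst[OF cf V x] unfolding V'_def by simp
qed

lemma validI:
  "(\<And>V x. \<forall>n. upset F (V n) \<Longrightarrow> x \<in> carrier F \<Longrightarrow> sat F V x \<phi>) \<Longrightarrow> valid F \<phi>"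
  unfolding valid_def by blast

lemma valid_mp:
  assumes cf: "cond_frame F" shows "valid F (Imp a b) \<Longrightarrow> valid F a \<Longrightarrow> valid F b"
  unfolding valid_def using cf_refl[OF cf] by auto

lemma sat_ImpI: "(\<And>y. y \<in> carrier F \<Longrightarrow> leq F x y \<Longrightarrow> sat F V y a \<Longrightarrow> sat F V y b) \<Longrightarrow> sat F V x (Imp a b)"
  by simp
lemma sat_ImpE: "sat F V x (Imp a b) \<Longrightarrow> leq F x y \<Longrightarrow> y \<in> carrier F \<Longrightarrow> sat F V y a \<Longrightarrow> sat F V y b"
  by simp

lemma IPC_valid:
  assumes cf: "cond_frame F" shows "\<phi> \<in> IPC \<Longrightarrow> valid F \<phi>"
proof (induction rule: IPC.induct)
  case (mp a b) then show ?case using valid_mp[OF cf] by blast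
next
  case (k a b) show ?case
  proof (rule validI, rule sat_ImpI, rule sat_ImpI)
    fix V :: "nat \<Rightarrow> _" and x y z
    assume "\<forall>n. upset F (V n)" "leq F y z" "sat F V y a"
    then show "sat F V z a" using persist[OF cf] by blast
  qed
next
  case (s a b c) show ?case
  proof (rule validI, rule sat_ImpI, rule sat_ImpI, rule sat_ImpI)
    fix V :: "nat \<Rightarrow> _" and x y z w
    assume h1: "sat F V y (Imp a (Imp b c))" and yz: "leq F y z" and h2: "sat F V z (Imp a b)"
      and w: "w \<in> carrier F" and zw: "leq F z w" and wa: "sat F V w a"
    have yw: "leq F y w" using cf_trans[OF cf yz zw] .
    have 1: "sat F V w (Imp b c)" using sat_ImpE[OF h1 yw w wa] .
    have 2: "sat F V w b" using sat_ImpE[OF h2 zw w wa] .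
    show "sat F V w c" using sat_ImpE[OF 1 cf_refl[OF cf w] w 2] .
  qed
next
  case (c1 a b) show ?case by (rule validI, rule sat_ImpI) simp
next
  case (c2 a b) show ?case by (rule validI, rule sat_ImpI) simp
next
  case (c3 a b) show ?case
  proof (rule validI, rule sat_ImpI, rule sat_ImpI)
    fix V :: "nat \<Rightarrow> _" and x y z
    assume "\<forall>n. upset F (V n)" "leq F y z" "sat F V y a" "sat F V z b"
    then show "sat F V z (And a b)" using persist[OF cf] by simp
  qed
next
  case (d1 a b) show ?case by (rule validI, rule sat_ImpI) simp
next
  case (d2 a b) show ?case by (rule validI, rule sat_ImpI) simp
next
  case (d3 a c b) show ?case
  proof (rule validI, rule sat_ImpI, rule sat_ImpI, rule sat_ImpI)
    fix V :: "nat \<Rightarrow> _" and x y z w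
    assume h1: "sat F V y (Imp a c)" and yz: "leq F y z" and h2: "sat F V z (Imp b c)"
      and w: "w \<in> carrier F" and zw: "leq F z w" and wab: "sat F V w (Or a b)"
    have yw: "leq F y w" using cf_trans[OF cf yz zw] .
    show "sat F V w c"
    proof (cases "sat F V w a")
      case True then show ?thesis using sat_ImpE[OF h1 yw w] by blast
    next
      case False then have "sat F V w b" using wab by simp
      then show ?thesis using sat_ImpE[OF h2 zw w] by blast
    qed
  qed
next
  case (efq a) show ?case by (rule validI, rule sat_ImpI) simp
qed

lemma valid_ImpI:
  assumes cf: "cond_frame F"
    and h: "\<And>V x. \<forall>n. upset F (V n) \<Longrightarrow> x \<in> carrier F \<Longrightarrow> sat F V x a \<Longrightarrow> sat F V x b"
  shows "valid F (Imp a b)"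
  by (rule validI) (use h cf_leq[OF cf] in auto)

lemma valid_IffI:
  assumes cf: "cond_frame F"
    and h: "\<And>V x. \<forall>n. upset F (V n) \<Longrightarrow> x \<in> carrier F \<Longrightarrow> sat F V x a = sat F V x b"
  shows "valid F (Iff a b)"
  unfolding Iff_def by (rule validI) (use h cf_leq[OF cf] in auto)

lemma valid_IffD:
  assumes cf: "cond_frame F" and v: "valid F (Iff a b)" and V: "\<forall>n. upset F (V n)"
    and x: "x \<in> carrier F"
  shows "sat F V x a = sat F V x b"
  using v V x cf_refl[OF cf x] unfolding valid_def Iff_def by auto

lemma icb_caut: "iCB_frame F \<Longrightarrow> cautious F"
  by (unfold iCB_frame_def, elim conjE, assumption)
lemma icb_cso0: "iCB_frame F \<Longrightarrow> (\<forall>x\<in>carrier F. \<forall>a b. upset F a \<longrightarrow> upset F b \<longrightarrow>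
        img F a x \<subseteq> b \<longrightarrow> img F b x \<subseteq> a \<longrightarrow> up F (img F a x) = up F (img F b x))"
  by (unfold iCB_frame_def, elim conjE, assumption)
lemma icb_T0: "iCB_frame F \<Longrightarrow> (\<forall>a. upset F a \<longrightarrow>
        (\<forall>x y z. rel F a x y \<longrightarrow> rel F a y z \<longrightarrow> (\<exists>w. rel F a x w \<and> leq F w z)))"
  by (unfold iCB_frame_def, elim conjE, assumption)
lemma caut_cf: "cautious F \<Longrightarrow> cond_frame F"
  by (unfold cautious_def, elim conjE, assumption)
lemma caut0: "cautious F \<Longrightarrow> (\<forall>x\<in>carrier F. \<forall>a b. upset F a \<longrightarrow> upset F b \<longrightarrow>
        img F a x \<subseteq> a \<and>
        (img F a x \<subseteq> b \<and> b \<subseteq> a \<longrightarrow> up F (img F a x) = up F (img F b x)))"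
  by (unfold cautious_def, elim conjE, assumption)

lemma icb_cf: "iCB_frame F \<Longrightarrow> cond_frame F"
  using icb_caut caut_cf by metis
lemma icb_id: "iCB_frame F \<Longrightarrow> x \<in> carrier F \<Longrightarrow> upset F a \<Longrightarrow> rel F a x y \<Longrightarrow> y \<in> a"
proof -
  assume "iCB_frame F" "x \<in> carrier F" "upset F a" "rel F a x y"
  then have "img F a x \<subseteq> a" using caut0[OF icb_caut] by metis
  then show "y \<in> a" using \<open>rel F a x y\<close> unfolding img_def by blast
qed
lemma icb_cau: "iCB_frame F \<Longrightarrow> x \<in> carrier F \<Longrightarrow> upset F a \<Longrightarrow> upset F b \<Longrightarrow>
   img F a x \<subseteq> b \<Longrightarrow> b \<subseteq> a \<Longrightarrow> up F (img F a x) = up F (img F b x)"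
  using caut0[OF icb_caut] by metis
lemma icb_cso: "iCB_frame F \<Longrightarrow> x \<in> carrier F \<Longrightarrow> upset F a \<Longrightarrow> upset F b \<Longrightarrow>
   img F a x \<subseteq> b \<Longrightarrow> img F b x \<subseteq> a \<Longrightarrow> up F (img F a x) = up F (img F b x)"
  using icb_cso0 by metis
lemma icb_T: "iCB_frame F \<Longrightarrow> upset F a \<Longrightarrow> rel F a x y \<Longrightarrow> rel F a y z \<Longrightarrow> \<exists>w. rel F a x w \<and> leq F w z"
  using icb_T0 by metis

lemma up_transfer:
  assumes cf: "cond_frame F" and V: "\<forall>n. upset F (V n)" and B: "upset F B"
    and eq: "up F (img F A x) = up F (img F B x)"
    and h: "\<forall>y. rel F A x y \<longrightarrow> sat F V y r" and r: "rel F B x y"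
  shows "sat F V y r"
proof -
  have yC: "y \<in> carrier F" using cf_rel[OF cf B r] by blast
  have "y \<in> img F B x" using r unfolding img_def by simp
  then have "y \<in> up F (img F B x)" using yC cf_refl[OF cf yC] unfolding up_def by blast
  then have "y \<in> up F (img F A x)" using eq by simp
  then obtain s where "s \<in> img F A x" "leq F s y" unfolding up_def by blast
  then have "rel F A x s" "leq F s y" unfolding img_def by auto
  then show ?thesis using h persist[OF cf V] by blast
qed


context
  fixes F :: "('w, 'm) cframe_scheme"
  assumes fr: "iCB_frame F"
begin

lemma cfF: "cond_frame F" by (rule icb_cf[OF fr])

lemma euF: "\<forall>n. upset F (V n) \<Longrightarrow> upset F {z \<in> carrier F. sat F V z \<phi>}"
  by (rule ext_upset[OF cfF])

lemma sound_id: "valid F (Cond P P)"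
proof (rule validI)
  fix V :: "nat \<Rightarrow> _" and x assume V: "\<forall>n. upset F (V n)" and x: "x \<in> carrier F"
  show "sat F V x (Cond P P)" unfolding sat.simps(6)
  proof (intro allI impI)
    fix y assume r: "rel F {z \<in> carrier F. sat F V z P} x y"
    have "y \<in> {z \<in> carrier F. sat F V z P}" by (rule icb_id[OF fr x euF[OF V] r])
    then show "sat F V y P" by blast
  qed
qed

lemma sound_rt: "valid F (Imp (And (Cond P Q) (Cond (And P Q) Rr)) (Cond P Rr))"
proof (rule valid_ImpI[OF cfF])
  fix V :: "nat \<Rightarrow> _" and x
  assume V: "\<forall>n. upset F (V n)" and x: "x \<in> carrier F"
    and h: "sat F V x (And (Cond P Q) (Cond (And P Q) Rr))"
  define A where "A = {z \<in> carrier F. sat F V z P}"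
  define B where "B = {z \<in> carrier F. sat F V z (And P Q)}"
  have uA: "upset F A" unfolding A_def by (rule euF[OF V])
  have uB: "upset F B" unfolding B_def by (rule euF[OF V])
  have h1: "\<forall>y. rel F A x y \<longrightarrow> sat F V y Q" using h unfolding A_def sat.simps(3) sat.simps(6) by blast
  have h2: "\<forall>y. rel F B x y \<longrightarrow> sat F V y Rr" using h unfolding B_def sat.simps(3) sat.simps(6) by blast
  have "img F A x \<subseteq> B"
  proof
    fix y assume "y \<in> img F A x"
    then have r: "rel F A x y" unfolding img_def by simp
    have "y \<in> A" by (rule icb_id[OF fr x uA r])
    then show "y \<in> B" using h1 r unfolding A_def B_def sat.simps(3) by blast
  qed
  moreover have "B \<subseteq> A" unfolding A_def B_def sat.simps(3) by blast
  ultimately have "up F (img F A x) = up F (img F B x)" by (rule icb_cau[OF fr x uA uB])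
  then have eq: "up F (img F B x) = up F (img F A x)" by simp
  have "\<forall>y. rel F A x y \<longrightarrow> sat F V y Rr"
  proof (intro allI impI)
    fix y assume "rel F A x y"
    then show "sat F V y Rr" by (rule up_transfer[OF cfF V uA eq h2])
  qed
  then show "sat F V x (Cond P Rr)" unfolding sat.simps(6) A_def .
qed

lemma sound_cm: "valid F (Imp (And (Cond P Q) (Cond P Rr)) (Cond (And P Q) Rr))"
proof (rule valid_ImpI[OF cfF])
  fix V :: "nat \<Rightarrow> _" and x
  assume V: "\<forall>n. upset F (V n)" and x: "x \<in> carrier F"
    and h: "sat F V x (And (Cond P Q) (Cond P Rr))"
  define A where "A = {z \<in> carrier F. sat F V z P}"
  define B where "B = {z \<in> carrier F. sat F V z (And P Q)}"
  have uA: "upset F A" unfolding A_def by (rule euF[OF V])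
  have uB: "upset F B" unfolding B_def by (rule euF[OF V])
  have h1: "\<forall>y. rel F A x y \<longrightarrow> sat F V y Q" using h unfolding A_def sat.simps(3) sat.simps(6) by blast
  have h2: "\<forall>y. rel F A x y \<longrightarrow> sat F V y Rr" using h unfolding A_def sat.simps(3) sat.simps(6) by blast
  have "img F A x \<subseteq> B"
  proof
    fix y assume "y \<in> img F A x"
    then have r: "rel F A x y" unfolding img_def by simp
    have "y \<in> A" by (rule icb_id[OF fr x uA r])
    then show "y \<in> B" using h1 r unfolding A_def B_def sat.simps(3) by blast
  qed
  moreover have "B \<subseteq> A" unfolding A_def B_def sat.simps(3) by blast
  ultimately have eq: "up F (img F A x) = up F (img F B x)" by (rule icb_cau[OF fr x uA uB])
  have "\<forall>y. rel F B x y \<longrightarrow> sat F V y Rr"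
  proof (intro allI impI)
    fix y assume "rel F B x y"
    then show "sat F V y Rr" by (rule up_transfer[OF cfF V uB eq h2])
  qed
  then show "sat F V x (Cond (And P Q) Rr)" unfolding sat.simps(6) B_def .
qed

lemma sound_cso: "valid F (Imp (And (Cond P Q) (And (Cond Q P) (Cond P Rr))) (Cond Q Rr))"
proof (rule valid_ImpI[OF cfF])
  fix V :: "nat \<Rightarrow> _" and x
  assume V: "\<forall>n. upset F (V n)" and x: "x \<in> carrier F"
    and h: "sat F V x (And (Cond P Q) (And (Cond Q P) (Cond P Rr)))"
  define A where "A = {z \<in> carrier F. sat F V z P}"
  define B where "B = {z \<in> carrier F. sat F V z Q}"
  have uA: "upset F A" unfolding A_def by (rule euF[OF V])
  have uB: "upset F B" unfolding B_def by (rule euF[OF V])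
  have h1: "\<forall>y. rel F A x y \<longrightarrow> sat F V y Q" using h unfolding A_def sat.simps(3) sat.simps(6) by blast
  have h2: "\<forall>y. rel F B x y \<longrightarrow> sat F V y P" using h unfolding B_def sat.simps(3) sat.simps(6) by blast
  have h3: "\<forall>y. rel F A x y \<longrightarrow> sat F V y Rr" using h unfolding A_def sat.simps(3) sat.simps(6) by blast
  have "img F A x \<subseteq> B"
  proof
    fix y assume "y \<in> img F A x"
    then have r: "rel F A x y" unfolding img_def by simp
    have "y \<in> A" by (rule icb_id[OF fr x uA r])
    then show "y \<in> B" using h1 r unfolding A_def B_def by blast
  qed
  moreover have "img F B x \<subseteq> A"
  proof
    fix y assume "y \<in> img F B x"
    then have r: "rel F B x y" unfolding img_def by simp
    have "y \<in> B" by (rule icb_id[OF fr x uB r])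
    then show "y \<in> A" using h2 r unfolding A_def B_def by blast
  qed
  ultimately have eq: "up F (img F A x) = up F (img F B x)" by (rule icb_cso[OF fr x uA uB])
  have "\<forall>y. rel F B x y \<longrightarrow> sat F V y Rr"
  proof (intro allI impI)
    fix y assume "rel F B x y"
    then show "sat F V y Rr" by (rule up_transfer[OF cfF V uB eq h3])
  qed
  then show "sat F V x (Cond Q Rr)" unfolding sat.simps(6) B_def .
qed

lemma sound_4: "valid F (Imp (Cond P Q) (Cond P (Cond P Q)))"
proof (rule valid_ImpI[OF cfF])
  fix V :: "nat \<Rightarrow> _" and x
  assume V: "\<forall>n. upset F (V n)" and x: "x \<in> carrier F" and h: "sat F V x (Cond P Q)"
  define A where "A = {z \<in> carrier F. sat F V z P}"
  have uA: "upset F A" unfolding A_def by (rule euF[OF V])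
  have h1: "\<forall>y. rel F A x y \<longrightarrow> sat F V y Q" using h unfolding A_def sat.simps(6) .
  have "\<forall>y. rel F A x y \<longrightarrow> (\<forall>z. rel F A y z \<longrightarrow> sat F V z Q)"
  proof (intro allI impI)
    fix y z assume "rel F A x y" "rel F A y z"
    then obtain w where w: "rel F A x w" "leq F w z" using icb_T[OF fr uA] by blast
    have "sat F V w Q" using h1 w(1) by blast
    then show "sat F V z Q" using persist[OF cfF V w(2)] by blast
  qed
  then show "sat F V x (Cond P (Cond P Q))" unfolding sat.simps(6) A_def .
qed

lemma sound_axioms: "a \<in> iCB_axioms \<Longrightarrow> valid F a"
  unfolding iCB_axioms_def iCC_axioms_def
  using sound_id sound_rt sound_cm sound_cso sound_4 by blast

lemma sound_cmax: "valid F (Iff (Cond P (And Q Rr)) (And (Cond P Q) (Cond P Rr)))"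
proof (rule valid_IffI[OF cfF])
  fix V :: "nat \<Rightarrow> _" and x
  show "sat F V x (Cond P (And Q Rr)) = sat F V x (And (Cond P Q) (Cond P Rr))"
    unfolding sat.simps(3) sat.simps(6) by blast
qed

lemma sound_cn: "valid F (Iff (Cond P Top) Top)"
  by (rule valid_IffI[OF cfF]) (simp add: Top_def)

lemma sound_congL: "valid F (Iff a b) \<Longrightarrow> valid F (Iff (Cond a c) (Cond b c))"
proof (rule valid_IffI[OF cfF])
  fix V :: "nat \<Rightarrow> _" and x
  assume v: "valid F (Iff a b)" and V: "\<forall>n. upset F (V n)"
  have "{z \<in> carrier F. sat F V z a} = {z \<in> carrier F. sat F V z b}"
    using valid_IffD[OF cfF v V] by blast
  then show "sat F V x (Cond a c) = sat F V x (Cond b c)" unfolding sat.simps(6) by simp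
qed

lemma sound_congR: "valid F (Iff a b) \<Longrightarrow> valid F (Iff (Cond c a) (Cond c b))"
proof (rule valid_IffI[OF cfF])
  fix V :: "nat \<Rightarrow> _" and x
  assume v: "valid F (Iff a b)" and V: "\<forall>n. upset F (V n)"
  have "\<And>y. rel F {z \<in> carrier F. sat F V z c} x y \<Longrightarrow> sat F V y a = sat F V y b"
    using valid_IffD[OF cfF v V] cf_rel[OF cfF euF[OF V]] by blast
  then show "sat F V x (Cond c a) = sat F V x (Cond c b)" unfolding sat.simps(6) by blast
qed

lemma iCB_sound: "a \<in> iCB \<Longrightarrow> valid F a"
  unfolding iCB_def
proof (induction rule: ICK_plus.induct)
  case (ipc a) then show ?case by (rule IPC_valid[OF cfF])
next
  case (gam a) then show ?case by (rule sound_axioms)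
next
  case cm show ?case by (rule sound_cmax)
next
  case cn show ?case by (rule sound_cn)
next
  case (us a s) show ?case by (rule valid_subst[OF cfF us.IH])
next
  case (mp a b) then show ?case using valid_mp[OF cfF] by blast
next
  case (congL a b c) show ?case by (rule sound_congL[OF congL.IH])
next
  case (congR a b c) show ?case by (rule sound_congR[OF congR.IH])
qed

end


theorem theorem6p11:
  fixes a :: form
  shows "(a \<in> iCB \<longrightarrow> (\<forall>F :: 'w cframe. iCB_frame F \<longrightarrow> valid F a))
       \<and> ((\<forall>F :: form set set cframe. iCB_frame F \<longrightarrow> valid F a) \<longrightarrow> a \<in> iCB)"
proof (intro conjI impI allI)
  fix F :: "'w cframe"
  assume "a \<in> iCB" "iCB_frame F"
  then show "valid F a" using iCB_sound by blast
next
  assume "\<forall>F :: form set set cframe. iCB_frame F \<longrightarrow> valid F a"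
  then show "a \<in> iCB" by (rule completeness)
qed

end
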